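(* Let $L$ be a finite lattice and $\varphi\in M_\infty(L)$. Then for all $n\ge1$ and $a_1,\dots,a_n\in L$, $\Lambda_{a_1,\ldots,a_n}\varphi=\nabla_{a_1,\ldots,a_n}\varphi$.
   Context: $L$ is a finite lattice with meet $\wedge$ and join $\vee$. $\nabla_a\varphi(x)=\varphi(x)-\varphi(x\wedge a)$, $\nabla_{a_1,\ldots,a_n}\varphi=\nabla_{a_n}(\nabla_{a_1,\ldots,a_{n-1}}\varphi)$; $\varphi$ is completely monotone if all $\nabla_{a_1,\dots,a_n}\varphi\ge0$. $M_\infty(L)$ is the set of nonnegative completely monotone functions on $L$ (these are monotone). A path from $a$ to $b$ is a sequence $H=(h_0,\dots,h_m)$ of distinct elements with $h_0=a$, $h_m=b$; $\varphi(H)=\sum_{i=0}^m\varphi(h_i)-\sum_{i=1}^m\varphi(h_{i-1}\vee h_i)$; $\lambda(\varphi;a,b)=\max\{\varphi(H): H\text{ a path from }a\text{ to }b\}$; $\Lambda_a\varphi(x)=\varphi(x)-\lambda(\varphi;a,x)$ and $\Lambda_{a_1,\ldots,a_n}\varphi=\Lambda_{a_n}(\Lambda_{a_1,\ldots,a_{n-1}}\varphi)$. *)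

theory Defs
  imports Complex_Main
begin

definition nabla :: "'a::lattice \<Rightarrow> ('a \<Rightarrow> real) \<Rightarrow> 'a \<Rightarrow> real" where
  "nabla a \<phi> x = \<phi> x - \<phi> (inf x a)"

definition nablas :: "'a::lattice list \<Rightarrow> ('a \<Rightarrow> real) \<Rightarrow> 'a \<Rightarrow> real" where
  "nablas as \<phi> = foldl (\<lambda>\<psi> a. nabla a \<psi>) \<phi> as"

definition completely_monotone :: "('a::lattice \<Rightarrow> real) \<Rightarrow> bool" where
  "completely_monotone \<phi> \<longleftrightarrow> (\<forall>as x. as \<noteq> [] \<longrightarrow> nablas as \<phi> x \<ge> 0)"

definition M_infty :: "('a::{finite,lattice} \<Rightarrow> real) set" where
  "M_infty = {\<phi>. (\<forall>x. \<phi> x \<ge> 0) \<and> completely_monotone \<phi>}"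

definition paths :: "'a \<Rightarrow> 'a \<Rightarrow> 'a list set" where
  "paths a b = {H. H \<noteq> [] \<and> distinct H \<and> hd H = a \<and> last H = b}"

definition path_val :: "('a::lattice \<Rightarrow> real) \<Rightarrow> 'a list \<Rightarrow> real" where
  "path_val \<phi> H = (\<Sum>i<length H. \<phi> (H ! i)) - (\<Sum>i\<in>{1..<length H}. \<phi> (sup (H ! (i - 1)) (H ! i)))"

definition lam :: "('a::{finite,lattice} \<Rightarrow> real) \<Rightarrow> 'a \<Rightarrow> 'a \<Rightarrow> real" where
  "lam \<phi> a b = Max (path_val \<phi> ` paths a b)"

definition Lam :: "'a::{finite,lattice} \<Rightarrow> ('a \<Rightarrow> real) \<Rightarrow> 'a \<Rightarrow> real" where
  "Lam a \<phi> x = \<phi> x - lam \<phi> a x"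

definition Lams :: "'a::{finite,lattice} list \<Rightarrow> ('a \<Rightarrow> real) \<Rightarrow> 'a \<Rightarrow> real" where
  "Lams as \<phi> = foldl (\<lambda>\<psi> a. Lam a \<psi>) \<phi> as"

end

theory Submission
  imports Defs
begin

lemma pv1: "path_val \<phi> [x] = \<phi> x" by (simp add: path_val_def)

lemma pv2: "path_val \<phi> (x # y # H) = \<phi> x - \<phi> (sup x y) + path_val \<phi> (y # H)"
proof -
  have a: "(\<Sum>i<length (x#y#H). \<phi> ((x#y#H) ! i)) = \<phi> x + (\<Sum>i<length (y#H). \<phi> ((y#H) ! i))"
    by (simp only: length_Cons sum.lessThan_Suc_shift) simp
  have b: "(\<Sum>i\<in>{1..<length (x#y#H)}. \<phi> (sup ((x#y#H) ! (i - 1)) ((x#y#H) ! i)))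
     = \<phi> (sup x y) + (\<Sum>i\<in>{1..<length (y#H)}. \<phi> (sup ((y#H) ! (i - 1)) ((y#H) ! i)))"
  proof -
    have "{1..<length (x#y#H)} = insert 1 (Suc ` {1..<length (y#H)})" by auto
    moreover have "(\<Sum>i\<in>Suc ` {1..<length (y#H)}. \<phi> (sup ((x#y#H) ! (i - 1)) ((x#y#H) ! i)))
       = (\<Sum>i\<in>{1..<length (y#H)}. \<phi> (sup ((y#H) ! (i - 1)) ((y#H) ! i)))"
    proof -
      have inj: "inj_on Suc {1..<length (y#H)}" by simp
      have "(\<Sum>i\<in>Suc ` {1..<length (y#H)}. \<phi> (sup ((x#y#H) ! (i - 1)) ((x#y#H) ! i)))
         = (\<Sum>i\<in>{1..<length (y#H)}. \<phi> (sup ((x#y#H) ! (Suc i - 1)) ((x#y#H) ! Suc i)))"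
        by (simp only: sum.reindex[OF inj] comp_def)
      also have "\<dots> = (\<Sum>i\<in>{1..<length (y#H)}. \<phi> (sup ((y#H) ! (i - 1)) ((y#H) ! i)))"
      proof (rule sum.cong[OF refl])
        fix i assume "i \<in> {1..<length (y#H)}"
        then obtain j where "i = Suc j" by (cases i) auto
        thus "\<phi> (sup ((x#y#H) ! (Suc i - 1)) ((x#y#H) ! Suc i)) = \<phi> (sup ((y#H) ! (i - 1)) ((y#H) ! i))"
          by simp
      qed
      finally show ?thesis .
    qed
    ultimately show ?thesis by simp
  qed
  show ?thesis unfolding path_val_def a b by simp
qed

lemma cm_mono:
  assumes "completely_monotone \<phi>" "y \<le> x" shows "\<phi> y \<le> \<phi> x"
proof -
  have "nablas [y] \<phi> x \<ge> 0" using assms(1) unfolding completely_monotone_def by blast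
  thus ?thesis using assms(2) by (simp add: nablas_def nabla_def inf_absorb2)
qed

lemma cm_super:
  assumes "completely_monotone \<phi>"
  shows "\<phi> a + \<phi> b \<le> \<phi> (sup a b) + \<phi> (inf a b)"
proof -
  have "nablas [a, b] \<phi> (sup a b) \<ge> 0" using assms unfolding completely_monotone_def by blast
  moreover have e: "inf b (sup a b) = b" by (simp add: inf_absorb1)
  moreover have "inf a (inf b (sup a b)) = inf a b" unfolding e by (rule refl)
  moreover have "inf (sup a b) a = a" by (simp add: inf_absorb2)
  moreover have "inf (sup a b) b = b" by (simp add: inf_absorb2)
  moreover have "inf (inf (sup a b) b) a = inf a b" unfolding \<open>inf (sup a b) b = b\<close> by (rule inf_commute)
  ultimately show ?thesis by (simp add: nablas_def nabla_def)
qed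

lemma pv_le:
  assumes "completely_monotone \<phi>" "H \<noteq> []"
  shows "path_val \<phi> H \<le> \<phi> (inf (hd H) (last H))"
  using assms(2)
proof (induction H rule: induct_list012)
  case (2 x) thus ?case by (simp add: pv1)
next
  case (3 x y H)
  have ih: "path_val \<phi> (y # H) \<le> \<phi> (inf y (last (y#H)))" using 3(2) by simp
  define l where "l = last (y#H)"
  have s: "\<phi> x + \<phi> (inf y l) \<le> \<phi> (sup x (inf y l)) + \<phi> (inf x (inf y l))"
    using cm_super[OF assms(1)] .
  have m1: "\<phi> (sup x (inf y l)) \<le> \<phi> (sup x y)"
    by (rule cm_mono[OF assms(1)]) (simp add: le_supI2)
  have m2: "\<phi> (inf x (inf y l)) \<le> \<phi> (inf x l)"
    by (rule cm_mono[OF assms(1)]) (simp add: le_infI2)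
  have "path_val \<phi> (x # y # H) \<le> \<phi> (inf x l)"
    using ih s m1 m2 unfolding pv2 l_def by linarith
  thus ?case by (simp add: l_def)
qed simp

lemma finite_paths: "finite (paths (a::'a::finite) b)"
proof -
  have "paths a b \<subseteq> {xs. set xs \<subseteq> UNIV \<and> length xs \<le> card (UNIV::'a set)}"
  proof
    fix H assume "H \<in> paths a b"
    hence "distinct H" by (simp add: paths_def)
    hence "length H = card (set H)" by (simp add: distinct_card)
    also have "\<dots> \<le> card (UNIV::'a set)" by (rule card_mono) auto
    finally show "H \<in> {xs. set xs \<subseteq> UNIV \<and> length xs \<le> card (UNIV::'a set)}" by simp
  qed
  thus ?thesis by (rule finite_subset) (rule finite_lists_length_le, simp)
qed

lemma lam_eq:
  assumes "completely_monotone \<phi>"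
  shows "lam \<phi> a x = \<phi> (inf x a)"
  unfolding lam_def
proof (rule Max_eqI)
  show "finite (path_val \<phi> ` paths a x)" 
  proof (rule finite_imageI)
    show "finite (paths a x)" by (rule finite_paths)
  qed
next
  fix y assume "y \<in> path_val \<phi> ` paths a x"
  then obtain H where "H \<in> paths a x" "y = path_val \<phi> H" by blast
  thus "y \<le> \<phi> (inf x a)" using pv_le[OF assms, of H] by (simp add: paths_def inf_commute)
next
  show "\<phi> (inf x a) \<in> path_val \<phi> ` paths a x"
  proof (cases "a = x")
    case True
    hence "[a] \<in> paths a x" by (simp add: paths_def)
    thus ?thesis using True by (force simp: pv1)
  next
    case ne: False
    show ?thesis
    proof (cases "inf x a = a \<or> inf x a = x")
      case True
      have "[a, x] \<in> paths a x" using ne by (simp add: paths_def)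
      moreover have "path_val \<phi> [a, x] = \<phi> (inf x a)"
        using True
      proof
        assume h: "inf x a = a"
        hence "a \<le> x" by (simp add: inf.absorb_iff2)
        thus ?thesis using h unfolding pv2 pv1 by (simp add: sup_absorb2)
      next
        assume h: "inf x a = x"
        hence "x \<le> a" by (simp add: inf.absorb_iff1)
        thus ?thesis using h unfolding pv2 pv1 by (simp add: sup_absorb1)
      qed
      ultimately show ?thesis by force
    next
      case False
      have "[a, inf x a, x] \<in> paths a x" using ne False by (auto simp: paths_def)
      moreover have "path_val \<phi> [a, inf x a, x] = \<phi> (inf x a)"
        unfolding pv2 pv1 by (simp add: sup_absorb1 sup_absorb2)
      ultimately show ?thesis by force
    qed
  qed
qed

lemma nabla_M:
  assumes "\<phi> \<in> M_infty" shows "nabla a \<phi> \<in> M_infty"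
proof -
  have cm: "completely_monotone \<phi>" using assms by (simp add: M_infty_def)
  have e: "nablas (a # as) \<phi> = nablas as (nabla a \<phi>)" for as by (simp add: nablas_def)
  have "nablas [a] \<phi> x \<ge> 0" for x using cm unfolding completely_monotone_def by blast
  hence p: "nabla a \<phi> x \<ge> 0" for x by (simp add: nablas_def)
  have "nablas as (nabla a \<phi>) x \<ge> 0" if "as \<noteq> []" for as x
  proof -
    have "nablas (a # as) \<phi> x \<ge> 0" using cm unfolding completely_monotone_def by blast
    thus ?thesis by (simp only: e)
  qed
  thus ?thesis using p unfolding M_infty_def completely_monotone_def by blast
qed

lemma main: "\<phi> \<in> M_infty \<Longrightarrow> Lams as \<phi> = nablas as \<phi>"
proof (induction as arbitrary: \<phi>)
  case Nil thus ?case by (simp add: Lams_def nablas_def)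
next
  case (Cons a as)
  have "Lam a \<phi> = nabla a \<phi>"
    using lam_eq[of \<phi> a] Cons.prems by (auto simp: Lam_def nabla_def M_infty_def fun_eq_iff)
  hence "Lams (a # as) \<phi> = Lams as (nabla a \<phi>)" by (simp add: Lams_def)
  also have "\<dots> = nablas as (nabla a \<phi>)" using Cons.IH nabla_M[OF Cons.prems] by blast
  also have "\<dots> = nablas (a # as) \<phi>" by (simp add: nablas_def)
  finally show ?case .
qed

theorem lemma3p16:
  fixes \<phi> :: "'a::{finite,lattice} \<Rightarrow> real" and as :: "'a list"
  assumes "\<phi> \<in> M_infty"
    and "as \<noteq> []"
  shows "Lams as \<phi> = nablas as \<phi>"
  using main assms(1) by blast

end
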